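(* Let $q_1^2(x),q_2^2(x)$ be positive piecewise-constant functions on $[0,1]$ with finitely many discontinuity points, and set $a_j(x):=q_j^{-2}(x)$, $j=1,2$. For $k\ge 0$ let $\psi_j(x,k)$ be the solution of $$-\psi_j''(x,k)+k^2q_j^2(x)\psi_j(x,k)=0,\quad 0\le x\le 1,\qquad \psi_j'(0,k)=0,\quad \psi_j(0,k)=1,$$ and for $\lambda\ge 0$ let $v_j(x,\lambda)$ be a nontrivial solution of $$\lambda v_j-(a_j(x)v_j')'=0,\quad 0\le x\le 1,\qquad v_j(0,\lambda)=0$$ (primes denote $d/dx$). Then the sets $\{\psi_1(x,k)\psi_2(x,k)\}_{k\ge 0}$ and $\{v_1'(x,\lambda)v_2'(x,\lambda)\}_{\lambda\ge 0}$ are dense in the set $\Pi$ of piecewise-constant functions on $[0,1]$ (with finitely many discontinuity points), in the following sense: if $h\in\Pi$ and $\int_0^1 h(x)\psi_1(x,k)\psi_2(x,k)\,dx=0$ for all $k>0$, then $h=0$; and if $h\in\Pi$ and $\int_0^1 h(x)v_1'(x,\lambda)v_2'(x,\lambda)\,dx=0$ for all $\lambda>0$, then $h=0$.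
   Context: $\Pi$ denotes the set of piecewise-constant functions on $[0,1]$ with finitely many discontinuity points. The solutions of the differential equations with piecewise-constant coefficients are understood in the usual sense for such equations (e.g. $\psi_j$ is the solution of the integral equation $\psi_j(x,k)=1+k^2\int_0^x(x-s)q_j^2(s)\psi_j(s,k)\,ds$, and $a_jv_j'$ is continuous). The property stated (completeness of products of solutions) is called Property C of the pair of operators $\ell_j=-\frac{d^2}{dx^2}+k^2q_j^2(x)$, resp. $L_ju=-[a_j(x)u']'+\lambda u$. *)

theory Defs
  imports "HOL-Analysis.Analysis"
begin

definition piecewise_const :: "(real \<Rightarrow> real) \<Rightarrow> bool" where
  "piecewise_const f \<longleftrightarrow>
     (\<exists>S. finite S \<and>
        (\<forall>x y. 0 \<le> x \<and> x \<le> y \<and> y \<le> 1 \<and> {x..y} \<inter> S = {} \<longrightarrow> f x = f y))"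

end

theory Submission
  imports Defs
begin


lemma pc_obtain:
  assumes "piecewise_const f"
  obtains S where "finite S" "\<And>x y. 0 \<le> x \<Longrightarrow> x \<le> y \<Longrightarrow> y \<le> 1 \<Longrightarrow> {x..y} \<inter> S = {} \<Longrightarrow> f x = f y"
  using assms unfolding piecewise_const_def by blast

lemma pc_const:
  fixes f :: "real \<Rightarrow> 'b" and a b x y :: real
  assumes "finite S" "\<And>x y. 0 \<le> x \<Longrightarrow> x \<le> y \<Longrightarrow> y \<le> 1 \<Longrightarrow> {x..y} \<inter> S = {} \<Longrightarrow> f x = f y"
    and "S \<subseteq> T" "\<forall>t\<in>T. t \<le> a \<or> b \<le> t" "0 \<le> a" "b \<le> 1"
    and "a < x" "x < b" "a < y" "y < b"
  shows "f x = f y"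
proof -
  have "{min x y..max x y} \<inter> S = {}"
  proof (rule ccontr)
    assume "{min x y..max x y} \<inter> S \<noteq> {}"
    then obtain s where "s \<in> S" "min x y \<le> s" "s \<le> max x y" by auto
    moreover have "s \<le> a \<or> b \<le> s" using assms(3,4) \<open>s \<in> S\<close> by auto
    ultimately show False using assms(7-10) by (auto simp: min_def max_def split: if_splits)
  qed
  hence "f (min x y) = f (max x y)" using assms(2)[of "min x y" "max x y"] assms(5-10) by auto
  thus ?thesis by (cases "x \<le> y") (auto simp: min_def max_def)
qed

lemma gap:
  fixes T :: "real set"
  assumes "finite T" "0 \<in> T" "1 \<in> T" "y \<in> {0..1}" "y \<notin> T"
  obtains a b where "a \<in> T" "b \<in> T" "a < y" "y < b" "\<forall>t\<in>T. t \<le> a \<or> b \<le> t"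
proof -
  have y: "0 < y" "y < 1" using assms by (auto simp: less_le)
  define A where "A = {t\<in>T. t < y}"
  define B where "B = {t\<in>T. y < t}"
  have fA: "finite A" "A \<noteq> {}" using assms y by (auto simp: A_def)
  have fB: "finite B" "B \<noteq> {}" using assms y by (auto simp: B_def)
  have a: "Max A \<in> T" "Max A < y" using Max_in[OF fA] by (auto simp: A_def)
  have b: "Min B \<in> T" "y < Min B" using Min_in[OF fB] by (auto simp: B_def)
  have "\<forall>t\<in>T. t \<le> Max A \<or> Min B \<le> t"
  proof
    fix t assume t: "t \<in> T"
    show "t \<le> Max A \<or> Min B \<le> t"
    proof (cases "t < y")
      case True then have "t \<in> A" using t by (auto simp: A_def)
      then show ?thesis using Max_ge[OF fA(1)] by auto
    next
      case False then have "t \<in> B" using t assms(5) by (auto simp: B_def less_le)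
      then show ?thesis using Min_le[OF fB(1)] by auto
    qed
  qed
  then show ?thesis using that a b by blast
qed

lemma pc_bounded:
  assumes "piecewise_const f"
  shows "\<exists>B. \<forall>x\<in>{0..1}. \<bar>f x\<bar> \<le> B"
proof -
  obtain S where S: "finite S" "\<And>x y. 0 \<le> x \<Longrightarrow> x \<le> y \<Longrightarrow> y \<le> 1 \<Longrightarrow> {x..y} \<inter> S = {} \<Longrightarrow> f x = f y"
    using pc_obtain[OF assms] by blast
  define T where "T = S \<union> {0,1}"
  have fT: "finite T" "0 \<in> T" "1 \<in> T" "S \<subseteq> T" using S by (auto simp: T_def)
  define M where "M = T \<union> (\<lambda>(a,b). (a+b)/2) ` (T \<times> T)"
  have fM: "finite M" using fT by (auto simp: M_def)
  define B where "B = Max ((\<lambda>x. \<bar>f x\<bar>) ` M)"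
  have "\<forall>x\<in>{0..1}. \<bar>f x\<bar> \<le> B"
  proof
    fix x assume x: "x \<in> {0..1::real}"
    show "\<bar>f x\<bar> \<le> B"
    proof (cases "x \<in> T")
      case True then show ?thesis unfolding B_def using fM by (auto simp: M_def intro!: Max_ge)
    next
      case False
      obtain a b where ab: "a \<in> T" "b \<in> T" "a < x" "x < b" "\<forall>t\<in>T. t \<le> a \<or> b \<le> t"
        using gap[OF fT(1-3) x False] by blast
      have "0 \<le> a" using ab(3,4,5) fT(2) x by fastforce
      have "b \<le> 1" using ab(3,4,5) fT(3) x by fastforce
      note \<open>0 \<le> a\<close> \<open>b \<le> 1\<close>
      have "f x = f ((a+b)/2)"
        by (rule pc_const[where S=S and T=T and a=a and b=b, OF S(1) S(2) fT(4) ab(5)]) (use ab \<open>0 \<le> a\<close> \<open>b \<le> 1\<close> in auto)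
      moreover have "(a+b)/2 \<in> M" using ab by (force simp: M_def)
      ultimately show ?thesis unfolding B_def using fM by (auto intro!: Max_ge)
    qed
  qed
  then show ?thesis by blast
qed

lemma pc_mult:
  assumes "piecewise_const f" "piecewise_const g"
  shows "piecewise_const (\<lambda>x. f x * g x)"
proof -
  obtain S where S: "finite S" "\<And>x y. 0 \<le> x \<Longrightarrow> x \<le> y \<Longrightarrow> y \<le> 1 \<Longrightarrow> {x..y} \<inter> S = {} \<Longrightarrow> f x = f y"
    using pc_obtain[OF assms(1)] by blast
  obtain S' where S': "finite S'" "\<And>x y. 0 \<le> x \<Longrightarrow> x \<le> y \<Longrightarrow> y \<le> 1 \<Longrightarrow> {x..y} \<inter> S' = {} \<Longrightarrow> g x = g y"
    using pc_obtain[OF assms(2)] by blast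
  show ?thesis unfolding piecewise_const_def
  proof (rule exI[of _ "S \<union> S'"], intro conjI allI impI)
    fix x y :: real assume "0 \<le> x \<and> x \<le> y \<and> y \<le> 1 \<and> {x..y} \<inter> (S \<union> S') = {}"
    then have "{x..y} \<inter> S = {}" "{x..y} \<inter> S' = {}" "0 \<le> x" "x \<le> y" "y \<le> 1" by blast+
    then show "f x * g x = f y * g y" using S(2)[of x y] S'(2)[of x y] by simp
  qed (use S S' in auto)
qed

lemma pc_integrable:
  fixes f g :: "real \<Rightarrow> real"
  assumes "piecewise_const f" "continuous_on {0..1} g" "0 \<le> a" "b \<le> 1"
  shows "(\<lambda>x. f x * g x) integrable_on {a..b}"
proof -
  obtain S where S: "finite S" "\<And>x y. 0 \<le> x \<Longrightarrow> x \<le> y \<Longrightarrow> y \<le> 1 \<Longrightarrow> {x..y} \<inter> S = {} \<Longrightarrow> f x = f y"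
    using pc_obtain[OF assms(1)] by blast
  define T where "T = S \<union> {0,1}"
  have fT: "finite T" "S \<subseteq> T" using S by (auto simp: T_def)
  have "\<forall>a b. card (T \<inter> {a<..<b}) = n \<longrightarrow> 0 \<le> a \<longrightarrow> b \<le> 1 \<longrightarrow> (\<lambda>x. f x * g x) integrable_on {a..b}" for n
  proof (induction n rule: less_induct)
    case (less n)
    show ?case
    proof (intro allI impI)
      fix a b :: real assume n: "card (T \<inter> {a<..<b}) = n" and ab: "0 \<le> a" "b \<le> 1"
      show "(\<lambda>x. f x * g x) integrable_on {a..b}"
      proof (cases "a < b")
        case False
        show ?thesis
        proof (cases "a = b")
          case True then show ?thesis using integrable_on_refl[of _ a] by (simp add: cbox_interval)
        next
          case False then have "{a..b} = {}" using \<open>\<not> a < b\<close> by auto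
          then show ?thesis using integrable_on_empty by metis
        qed
      next
        case ab2: True
        show ?thesis
        proof (cases "T \<inter> {a<..<b} = {}")
          case True
          then have gapT: "\<forall>t\<in>T. t \<le> a \<or> b \<le> t" by force
          have eq: "f x * g x = f ((a+b)/2) * g x" if "x \<in> {a..b} - {a,b}" for x
          proof -
            have "f x = f ((a+b)/2)"
              by (rule pc_const[where S=S and T=T and a=a and b=b, OF S(1) S(2) fT(2) gapT]) (use ab ab2 that in auto)
            then show ?thesis by simp
          qed
          have "continuous_on {a..b} g" using assms(2) by (rule continuous_on_subset) (use ab in auto)
          then have "(\<lambda>x. f ((a+b)/2) * g x) integrable_on {a..b}"
            by (intro integrable_continuous_real continuous_intros)
          then show ?thesis using integrable_spike_finite[where S="{a,b}" and T="{a..b}" and f="\<lambda>x. f ((a+b)/2) * g x" and g="\<lambda>x. f x * g x"] eq by blast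
        next
          case False
          then obtain t where t: "t \<in> T" "a < t" "t < b" by auto
          have fin: "finite (T \<inter> {a<..<b})" using fT by simp
          have "T \<inter> {a<..<t} \<subset> T \<inter> {a<..<b}" using t by auto
          then have c1: "card (T \<inter> {a<..<t}) < n" using n fin psubset_card_mono by metis
          have "T \<inter> {t<..<b} \<subset> T \<inter> {a<..<b}" using t by auto
          then have c2: "card (T \<inter> {t<..<b}) < n" using n fin psubset_card_mono by metis
          have i1: "(\<lambda>x. f x * g x) integrable_on {a..t}" using less.IH[OF c1] ab t by auto
          have i2: "(\<lambda>x. f x * g x) integrable_on {t..b}" using less.IH[OF c2] ab t by auto
          show ?thesis using Henstock_Kurzweil_Integration.integrable_combine[OF _ _ i1 i2] t by auto
        qed
      qed
    qed
  qed
  then show ?thesis using assms by blast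
qed




lemma int_pc2:
  fixes p \<phi> :: "real \<Rightarrow> real"
  assumes "piecewise_const p" "continuous_on {0..1} \<phi>" "0 \<le> u" "v \<le> 1"
  shows "(\<lambda>s. (x - s) * p s * \<phi> s) integrable_on {u..v}"
proof -
  have "continuous_on {0..1} (\<lambda>s. (x - s) * \<phi> s)" using assms(2) by (intro continuous_intros)
  from pc_integrable[OF assms(1) this assms(3,4)]
  show ?thesis by (simp add: ac_simps)
qed

lemma tri_integral:
  fixes a b :: real assumes "a \<le> b"
  shows "((\<lambda>s. b - s) has_integral (b-a)^2/2) {a..b}"
proof -
  define F where "F = (\<lambda>s::real. (s - b) * (b - s) / 2)"
  have "((\<lambda>s. b - s) has_integral (F b - F a)) {a..b}"
    unfolding F_def by (rule fundamental_theorem_of_calculus[OF assms])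
       (auto intro!: derivative_eq_intros simp: has_real_derivative_iff_has_vector_derivative[symmetric])
  moreover have "F b - F a = (b-a)^2/2" by (simp add: F_def power2_eq_square field_simps)
  ultimately show ?thesis by simp
qed

lemma volterra2:
  fixes p \<phi> :: "real \<Rightarrow> real" and K :: real
  assumes pc: "piecewise_const p" and pnn: "\<forall>x\<in>{0..1}. p x \<ge> 0"
    and cont: "continuous_on {0..1} \<phi>" and K: "K \<ge> 0"
    and eq: "\<forall>x\<in>{0..1}. \<phi> x = 1 + K * integral {0..x} (\<lambda>s. (x - s) * p s * \<phi> s)"
  shows "\<forall>x\<in>{0..1}. \<phi> x \<ge> 1"
    and "\<forall>x y. 0 \<le> x \<longrightarrow> x \<le> y \<longrightarrow> y \<le> 1 \<longrightarrow> \<phi> x \<le> \<phi> y"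
    and "\<forall>a b m. 0 \<le> a \<longrightarrow> a \<le> b \<longrightarrow> b \<le> 1 \<longrightarrow> (\<forall>s\<in>{a..b}. m \<le> p s) \<longrightarrow> 0 \<le> m \<longrightarrow>
            \<phi> a * (1 + K * m * (b - a)^2 / 2) \<le> \<phi> b"
proof -
  note I = int_pc2[OF pc cont]
  have ident: "\<phi> y - \<phi> x = K * (integral {0..x} (\<lambda>s. (y - x) * p s * \<phi> s) + integral {x..y} (\<lambda>s. (y - s) * p s * \<phi> s))"
    if xy: "0 \<le> x" "x \<le> y" "y \<le> 1" for x y
  proof -
    have e1: "integral {0..y} (\<lambda>s. (y - s) * p s * \<phi> s) = integral {0..x} (\<lambda>s. (y - s) * p s * \<phi> s) + integral {x..y} (\<lambda>s. (y - s) * p s * \<phi> s)"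
      using Henstock_Kurzweil_Integration.integral_combine[OF xy(1,2) I[of 0 y y]] xy by simp
    have e2: "integral {0..x} (\<lambda>s. (y - s) * p s * \<phi> s) - integral {0..x} (\<lambda>s. (x - s) * p s * \<phi> s)
        = integral {0..x} (\<lambda>s. (y - s) * p s * \<phi> s - (x - s) * p s * \<phi> s)"
      using Henstock_Kurzweil_Integration.integral_diff[OF I[of 0 x y] I[of 0 x x]] xy by simp
    have e3: "(\<lambda>s. (y - s) * p s * \<phi> s - (x - s) * p s * \<phi> s) = (\<lambda>s. (y - x) * p s * \<phi> s)"
      by (auto simp: algebra_simps)
    have "\<phi> y - \<phi> x = K * (integral {0..y} (\<lambda>s. (y - s) * p s * \<phi> s) - integral {0..x} (\<lambda>s. (x - s) * p s * \<phi> s))"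
      using eq xy by (simp add: algebra_simps)
    then show ?thesis using e1 e2 e3 by (simp add: algebra_simps)
  qed
  have phi0: "\<phi> 0 = 1" using eq by simp
  have pos: "\<forall>x\<in>{0..1}. \<phi> x > 0"
  proof (rule ccontr)
    assume "\<not> (\<forall>x\<in>{0..1}. \<phi> x > 0)"
    then have Zne: "{x\<in>{0..1}. \<phi> x \<le> 0} \<noteq> {}" by force
    define Z where "Z = {x\<in>{0..1}. \<phi> x \<le> 0}"
    have "closed ({0..1} \<inter> \<phi> -` {..0})"
      by (rule continuous_closed_preimage[OF cont]) auto
    moreover have "Z = {0..1} \<inter> \<phi> -` {..0}" by (auto simp: Z_def)
    ultimately have clZ: "closed Z" by simp
    have bdd: "bdd_below Z" by (auto simp: Z_def bdd_below_def)
    define t where "t = Inf Z"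
    have tZ: "t \<in> Z" using closed_contains_Inf[OF _ bdd clZ] Zne unfolding t_def Z_def by blast
    have below: "\<phi> s > 0" if "0 \<le> s" "s < t" for s
    proof (rule ccontr)
      assume "\<not> \<phi> s > 0"
      then have "s \<in> Z" using that tZ by (auto simp: Z_def)
      then have "t \<le> s" unfolding t_def using cInf_lower[OF _ bdd] by blast
      then show False using that by simp
    qed
    have t01: "0 \<le> t" "t \<le> 1" using tZ by (auto simp: Z_def)
    have "0 \<le> integral {0..t} (\<lambda>s. (t - s) * p s * \<phi> s)"
    proof (rule integral_nonneg[OF I[of 0 t t]])
      fix s assume s: "s \<in> {0..t}"
      show "0 \<le> (t - s) * p s * \<phi> s"
      proof (cases "s = t")
        case False then have "\<phi> s > 0" using below s by auto
        then show ?thesis using s pnn t01 by (auto intro!: mult_nonneg_nonneg)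
      qed simp
    qed (use t01 in auto)
    then have "\<phi> t \<ge> 1" using eq t01 K by (auto intro!: mult_nonneg_nonneg)
    then show False using tZ by (auto simp: Z_def)
  qed
  have nn: "0 \<le> integral {u..v} (\<lambda>s. (x - s) * p s * \<phi> s)" if "0 \<le> u" "v \<le> 1" "v \<le> x" for u v x
  proof (rule integral_nonneg[OF I[of u v x]])
    fix s assume "s \<in> {u..v}"
    then have "\<phi> s > 0" "p s \<ge> 0" using that pos pnn by auto
    then show "0 \<le> (x - s) * p s * \<phi> s" using that \<open>s \<in> {u..v}\<close> by (auto intro!: mult_nonneg_nonneg)
  qed (use that in auto)
  have nn2: "0 \<le> integral {0..x} (\<lambda>s. c * p s * \<phi> s)" if "0 \<le> x" "x \<le> 1" "0 \<le> c" for x c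
  proof (rule integral_nonneg)
    have "continuous_on {0..1} (\<lambda>s. c * \<phi> s)" using cont by (intro continuous_intros)
    from pc_integrable[OF pc this, of 0 x] that
    show "(\<lambda>s. c * p s * \<phi> s) integrable_on {0..x}" by (simp add: ac_simps)
    fix s assume "s \<in> {0..x}"
    then have "\<phi> s > 0" "p s \<ge> 0" using that pos pnn by auto
    then show "0 \<le> c * p s * \<phi> s" using that by auto
  qed
  show "\<forall>x\<in>{0..1}. \<phi> x \<ge> 1"
  proof
    fix x :: real assume x: "x \<in> {0..1}"
    have "0 \<le> integral {0..x} (\<lambda>s. (x - s) * p s * \<phi> s)" by (rule nn) (use x in auto)
    then show "\<phi> x \<ge> 1" using eq x K by (auto intro!: mult_nonneg_nonneg)
  qed
  show mono: "\<forall>x y. 0 \<le> x \<longrightarrow> x \<le> y \<longrightarrow> y \<le> 1 \<longrightarrow> \<phi> x \<le> \<phi> y"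
  proof (intro allI impI)
    fix x y :: real assume xy: "0 \<le> x" "x \<le> y" "y \<le> 1"
    have "0 \<le> integral {0..x} (\<lambda>s. (y - x) * p s * \<phi> s)" by (rule nn2) (use xy in auto)
    moreover have "0 \<le> integral {x..y} (\<lambda>s. (y - s) * p s * \<phi> s)" by (rule nn) (use xy in auto)
    ultimately show "\<phi> x \<le> \<phi> y" using ident[OF xy] K by (smt (verit) mult_nonneg_nonneg)
  qed
  show "\<forall>a b m. 0 \<le> a \<longrightarrow> a \<le> b \<longrightarrow> b \<le> 1 \<longrightarrow> (\<forall>s\<in>{a..b}. m \<le> p s) \<longrightarrow> 0 \<le> m \<longrightarrow>
            \<phi> a * (1 + K * m * (b - a)^2 / 2) \<le> \<phi> b"
  proof (intro allI impI)
    fix a b m :: real assume ab: "0 \<le> a" "a \<le> b" "b \<le> 1" "\<forall>s\<in>{a..b}. m \<le> p s" "0 \<le> m"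
    have pa: "\<phi> a > 0" using pos ab by auto
    have h1: "((\<lambda>s. (b - s) * (m * \<phi> a)) has_integral ((b-a)^2/2 * (m * \<phi> a))) {a..b}"
      by (rule has_integral_mult_left[OF tri_integral[OF ab(2)]])
    have "integral {a..b} (\<lambda>s. (b - s) * (m * \<phi> a)) \<le> integral {a..b} (\<lambda>s. (b - s) * p s * \<phi> s)"
    proof (rule integral_le)
      show "(\<lambda>s. (b - s) * (m * \<phi> a)) integrable_on {a..b}" using h1 by blast
      show "(\<lambda>s. (b - s) * p s * \<phi> s) integrable_on {a..b}" by (rule I) (use ab in auto)
      fix s assume s: "s \<in> {a..b}"
      have "\<phi> a \<le> \<phi> s" using mono ab s by auto
      moreover have "m \<le> p s" using ab s by auto
      ultimately have "m * \<phi> a \<le> p s * \<phi> s" using pa ab by (intro mult_mono) auto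
      then show "(b - s) * (m * \<phi> a) \<le> (b - s) * p s * \<phi> s" using s
        by (simp add: mult.assoc mult_left_mono)
    qed
    moreover have "integral {a..b} (\<lambda>s. (b - s) * (m * \<phi> a)) = (b-a)^2/2 * (m * \<phi> a)"
      using h1 by (rule integral_unique)
    ultimately have "(b-a)^2/2 * (m * \<phi> a) \<le> integral {a..b} (\<lambda>s. (b - s) * p s * \<phi> s)"
      by linarith
    moreover have "0 \<le> integral {0..a} (\<lambda>s. (b - a) * p s * \<phi> s)" by (rule nn2) (use ab in auto)
    ultimately have "\<phi> b - \<phi> a \<ge> K * ((b-a)^2/2 * (m * \<phi> a))"
      using ident[of a b] ab K by (smt (verit) mult_left_mono)
    then show "\<phi> a * (1 + K * m * (b - a)^2 / 2) \<le> \<phi> b" by (simp add: algebra_simps)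
  qed
qed




lemma integral_nonneg_finite:
  fixes f :: "real \<Rightarrow> real"
  assumes "finite F" "f integrable_on S" "\<And>x. x \<in> S - F \<Longrightarrow> 0 \<le> f x"
  shows "0 \<le> integral S f"
proof -
  define g where "g = (\<lambda>x. if x \<in> F then 0 else f x)"
  have "integral S f = integral S g"
    by (rule integral_spike[OF negligible_finite[OF assms(1)]]) (auto simp: g_def)
  moreover have "g integrable_on S"
    by (rule integrable_spike_finite[OF assms(1) _ assms(2)]) (auto simp: g_def)
  moreover have "\<And>x. x \<in> S \<Longrightarrow> 0 \<le> g x" using assms(3) by (auto simp: g_def)
  ultimately show ?thesis using integral_nonneg by metis
qed

lemma tri_integral2:
  fixes a b :: real assumes "a \<le> b"
  shows "((\<lambda>s. s - a) has_integral (b-a)^2/2) {a..b}"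
proof -
  define F where "F = (\<lambda>s::real. (s - a) * (s - a) / 2)"
  have "((\<lambda>s. s - a) has_integral (F b - F a)) {a..b}"
    unfolding F_def by (rule fundamental_theorem_of_calculus[OF assms])
       (auto intro!: derivative_eq_intros simp: has_real_derivative_iff_has_vector_derivative[symmetric] field_simps)
  moreover have "F b - F a = (b-a)^2/2" by (simp add: F_def power2_eq_square field_simps)
  ultimately show ?thesis by simp
qed

lemma gronwall0:
  fixes u :: "real \<Rightarrow> real"
  assumes cont: "continuous_on {0..1} u" and nn: "\<forall>x\<in>{0..1}. 0 \<le> u x" and C: "C \<ge> 0"
    and le: "\<forall>x\<in>{0..1}. u x \<le> C * integral {0..x} u"
  shows "\<forall>x\<in>{0..1}. u x = 0"
proof -
  define U where "U = (\<lambda>x. integral {0..x} u)"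
  define G where "G = (\<lambda>x. exp (- C * x) * U x)"
  have Ucont: "continuous_on {0..1} U" unfolding U_def
    by (rule indefinite_integral_continuous_1[OF integrable_continuous_real[OF cont]])
  have Gcont: "continuous_on {0..1} G" unfolding G_def using Ucont by (intro continuous_intros)
  have Unn: "0 \<le> U x" if "x \<in> {0..1}" for x
    unfolding U_def
    by (rule integral_nonneg[OF integrable_continuous_real]) (use that nn in \<open>auto intro: continuous_on_subset[OF cont]\<close>)
  have dU: "(U has_real_derivative u x) (at x)" if "0 < x" "x < 1" for x
  proof -
    have "(U has_vector_derivative u x) (at x within {0..1})"
      unfolding U_def by (rule integral_has_vector_derivative[OF cont]) (use that in auto)
    moreover have "at x within {0..1} = at x" by (rule at_within_interior) (use that in auto)
    ultimately show ?thesis by (simp add: has_real_derivative_iff_has_vector_derivative)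
  qed
  have G0: "G 0 = 0" by (simp add: G_def U_def)
  have Gle: "G x \<le> 0" if x: "x \<in> {0..1}" for x
  proof -
    have "G 0 \<ge> G x"
    proof (rule DERIV_nonpos_imp_decreasing_open[of 0 x G])
      show "0 \<le> x" using x by auto
      show "continuous_on {0..x} G" by (rule continuous_on_subset[OF Gcont]) (use x in auto)
      fix y assume y: "0 < y" "y < x"
      have "(G has_real_derivative (exp (- C * y) * u y + (- C * exp (- C * y)) * U y)) (at y)"
        unfolding G_def using dU[of y] y x
        by (auto intro!: derivative_eq_intros simp: algebra_simps)
      moreover have "exp (- C * y) * u y + (- C * exp (- C * y)) * U y \<le> 0"
      proof -
        have "u y \<le> C * U y" using le y x by (auto simp: U_def)
        then have "exp (- C * y) * u y \<le> exp (- C * y) * (C * U y)" by (intro mult_left_mono) auto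
        then show ?thesis by (simp add: algebra_simps)
      qed
      ultimately show "\<exists>d. (G has_real_derivative d) (at y) \<and> d \<le> 0" by blast
    qed
    then show ?thesis using G0 by simp
  qed
  have "U x = 0" if "x \<in> {0..1}" for x
  proof -
    have "exp (- C * x) * U x \<le> 0" using Gle[OF that] by (simp add: G_def)
    then have "U x \<le> 0" by (simp add: mult_le_0_iff)
    then show ?thesis using Unn[OF that] by simp
  qed
  then show ?thesis using le nn by (fastforce simp: U_def)
qed

lemma volterra_sys:
  fixes p W V :: "real \<Rightarrow> real" and l :: real
  assumes pc: "piecewise_const p" and pnn: "\<forall>x\<in>{0..1}. p x \<ge> 0"
    and contW: "continuous_on {0..1} W" and contV: "continuous_on {0..1} V" and l: "l \<ge> 0"
    and eqV: "\<forall>x\<in>{0..1}. V x = integral {0..x} (\<lambda>s. W s * p s)"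
    and eqW: "\<forall>x\<in>{0..1}. W x = 1 + l * integral {0..x} V"
  shows "\<forall>x\<in>{0..1}. W x \<ge> 1"
    and "\<forall>x y. 0 \<le> x \<longrightarrow> x \<le> y \<longrightarrow> y \<le> 1 \<longrightarrow> W x \<le> W y"
    and "\<forall>a b m. 0 \<le> a \<longrightarrow> a \<le> b \<longrightarrow> b \<le> 1 \<longrightarrow> (\<forall>s\<in>{a..b}. m \<le> p s) \<longrightarrow> 0 \<le> m \<longrightarrow>
            W a * (1 + l * m * (b - a)^2 / 2) \<le> W b"
proof -
  have IW: "(\<lambda>s. W s * p s) integrable_on {u..v}" if "0 \<le> u" "v \<le> 1" for u v
    using pc_integrable[OF pc contW that] by (simp add: ac_simps)
  have IV: "V integrable_on {u..v}" if "0 \<le> u" "v \<le> 1" for u v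
    by (rule integrable_continuous_real, rule continuous_on_subset[OF contV]) (use that in auto)
  have diffV: "V y - V x = integral {x..y} (\<lambda>s. W s * p s)" if xy: "0 \<le> x" "x \<le> y" "y \<le> 1" for x y
    using Henstock_Kurzweil_Integration.integral_combine[OF xy(1,2) IW[of 0 y]] xy eqV by auto
  have diffW: "W y - W x = l * integral {x..y} V" if xy: "0 \<le> x" "x \<le> y" "y \<le> 1" for x y
  proof -
    have "integral {0..y} V = integral {0..x} V + integral {x..y} V"
      using Henstock_Kurzweil_Integration.integral_combine[OF xy(1,2) IV[of 0 y]] xy by simp
    moreover have "W y = 1 + l * integral {0..y} V" "W x = 1 + l * integral {0..x} V" using eqW xy by auto
    ultimately show ?thesis by (simp add: algebra_simps)
  qed
  have pos: "\<forall>x\<in>{0..1}. W x > 0"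
  proof (rule ccontr)
    assume "\<not> (\<forall>x\<in>{0..1}. W x > 0)"
    then have Zne: "{x\<in>{0..1}. W x \<le> 0} \<noteq> {}" by force
    define Z where "Z = {x\<in>{0..1}. W x \<le> 0}"
    have "closed ({0..1} \<inter> W -` {..0})"
      by (rule continuous_closed_preimage[OF contW]) auto
    moreover have "Z = {0..1} \<inter> W -` {..0}" by (auto simp: Z_def)
    ultimately have clZ: "closed Z" by simp
    have bdd: "bdd_below Z" by (auto simp: Z_def bdd_below_def)
    define t where "t = Inf Z"
    have tZ: "t \<in> Z" using closed_contains_Inf[OF _ bdd clZ] Zne unfolding t_def Z_def by blast
    have below: "W s > 0" if "0 \<le> s" "s < t" for s
    proof (rule ccontr)
      assume "\<not> W s > 0"
      then have "s \<in> Z" using that tZ by (auto simp: Z_def)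
      then have "t \<le> s" unfolding t_def using cInf_lower[OF _ bdd] by blast
      then show False using that by simp
    qed
    have t01: "0 \<le> t" "t \<le> 1" using tZ by (auto simp: Z_def)
    have Vnn: "0 \<le> V s" if "0 \<le> s" "s < t" for s
    proof -
      have "0 \<le> integral {0..s} (\<lambda>s. W s * p s)"
      proof (rule integral_nonneg[OF IW])
        fix r assume "r \<in> {0..s}"
        then have "W r > 0" "p r \<ge> 0" using below that t01 pnn by auto
        then show "0 \<le> W r * p r" by simp
      qed (use that t01 in auto)
      then show ?thesis using eqV that t01 by auto
    qed
    have "0 \<le> integral {0..t} V"
      by (rule integral_nonneg_finite[of "{t}"]) (use IV t01 Vnn in auto)
    then have "W t \<ge> 1" using eqW t01 l by (auto intro!: mult_nonneg_nonneg)
    then show False using tZ by (auto simp: Z_def)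
  qed
  have Vnn: "0 \<le> V x" if "x \<in> {0..1}" for x
  proof -
    have "0 \<le> integral {0..x} (\<lambda>s. W s * p s)"
    proof (rule integral_nonneg[OF IW])
      fix r assume "r \<in> {0..x}"
      then have "W r > 0" "p r \<ge> 0" using pos that pnn by auto
      then show "0 \<le> W r * p r" by simp
    qed (use that in auto)
    then show ?thesis using eqV that by auto
  qed
  have intVnn: "0 \<le> integral {x..y} V" if "0 \<le> x" "y \<le> 1" for x y
    by (rule integral_nonneg[OF IV]) (use that Vnn in auto)
  show "\<forall>x\<in>{0..1}. W x \<ge> 1"
    using eqW intVnn[of 0] l by (auto intro!: mult_nonneg_nonneg)
  show mono: "\<forall>x y. 0 \<le> x \<longrightarrow> x \<le> y \<longrightarrow> y \<le> 1 \<longrightarrow> W x \<le> W y"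
  proof (intro allI impI)
    fix x y :: real assume xy: "0 \<le> x" "x \<le> y" "y \<le> 1"
    show "W x \<le> W y" using diffW[OF xy] intVnn[of x y] xy l by (smt (verit) mult_nonneg_nonneg)
  qed
  show "\<forall>a b m. 0 \<le> a \<longrightarrow> a \<le> b \<longrightarrow> b \<le> 1 \<longrightarrow> (\<forall>s\<in>{a..b}. m \<le> p s) \<longrightarrow> 0 \<le> m \<longrightarrow>
            W a * (1 + l * m * (b - a)^2 / 2) \<le> W b"
  proof (intro allI impI)
    fix a b m :: real assume ab: "0 \<le> a" "a \<le> b" "b \<le> 1" "\<forall>s\<in>{a..b}. m \<le> p s" "0 \<le> m"
    have pa: "W a > 0" using pos ab by auto
    have Vlow: "(s - a) * (m * W a) \<le> V s" if s: "s \<in> {a..b}" for s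
    proof -
      have h1: "((\<lambda>r. m * W a) has_integral (s - a) * (m * W a)) {a..s}"
        using has_integral_const_real[of "m * W a" a s] s by simp
      have "integral {a..s} (\<lambda>r. m * W a) \<le> integral {a..s} (\<lambda>r. W r * p r)"
      proof (rule integral_le)
        show "(\<lambda>r. m * W a) integrable_on {a..s}" using h1 by blast
        show "(\<lambda>r. W r * p r) integrable_on {a..s}" by (rule IW) (use ab s in auto)
        fix r assume r: "r \<in> {a..s}"
        have "W a \<le> W r" using mono ab s r by auto
        moreover have "m \<le> p r" using ab s r by auto
        ultimately have "m * W a \<le> p r * W r" using pa ab by (intro mult_mono) auto
        then show "m * W a \<le> W r * p r" by (simp add: mult.commute)
      qed
      moreover have "integral {a..s} (\<lambda>r. m * W a) = (s - a) * (m * W a)"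
        using h1 by (rule integral_unique)
      moreover have "V s - V a = integral {a..s} (\<lambda>r. W r * p r)" by (rule diffV) (use ab s in auto)
      moreover have "V a \<ge> 0" using Vnn ab by auto
      ultimately show ?thesis by linarith
    qed
    have h2: "((\<lambda>s. (s - a) * (m * W a)) has_integral ((b-a)^2/2 * (m * W a))) {a..b}"
      by (rule has_integral_mult_left[OF tri_integral2[OF ab(2)]])
    have "integral {a..b} (\<lambda>s. (s - a) * (m * W a)) \<le> integral {a..b} V"
      by (rule integral_le) (use h2 IV ab Vlow in auto)
    moreover have "integral {a..b} (\<lambda>s. (s - a) * (m * W a)) = (b-a)^2/2 * (m * W a)"
      using h2 by (rule integral_unique)
    ultimately have "W b - W a \<ge> l * ((b-a)^2/2 * (m * W a))"
      using diffW[of a b] ab l by (smt (verit) mult_left_mono)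
    then show "W a * (1 + l * m * (b - a)^2 / 2) \<le> W b" by (simp add: algebra_simps)
  qed
qed




lemma density:
  fixes p1 p2 h :: "real \<Rightarrow> real" and f1 f2 :: "real \<Rightarrow> real \<Rightarrow> real"
  assumes pc1: "piecewise_const p1" and pc2: "piecewise_const p2"
    and pos1: "\<forall>x\<in>{0..1}. p1 x > 0" and pos2: "\<forall>x\<in>{0..1}. p2 x > 0"
    and pch: "piecewise_const h"
    and Fc: "\<And>K. K > 0 \<Longrightarrow> continuous_on {0..1} (\<lambda>x. f1 x K) \<and> continuous_on {0..1} (\<lambda>x. f2 x K)"
    and Fp: "\<And>K x. K > 0 \<Longrightarrow> x \<in> {0..1} \<Longrightarrow> f1 x K > 0 \<and> f2 x K > 0"
    and Fm: "\<And>K x y. K > 0 \<Longrightarrow> 0 \<le> x \<Longrightarrow> x \<le> y \<Longrightarrow> y \<le> 1 \<Longrightarrow> f1 x K \<le> f1 y K \<and> f2 x K \<le> f2 y K"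
    and Fg: "\<And>K a b m. K > 0 \<Longrightarrow> 0 \<le> a \<Longrightarrow> a \<le> b \<Longrightarrow> b \<le> 1 \<Longrightarrow> (\<forall>s\<in>{a..b}. m \<le> p1 s) \<Longrightarrow>
        (\<forall>s\<in>{a..b}. m \<le> p2 s) \<Longrightarrow> 0 \<le> m \<Longrightarrow>
        f1 a K * (1 + K * m * (b - a)^2 / 2) \<le> f1 b K \<and> f2 a K * (1 + K * m * (b - a)^2 / 2) \<le> f2 b K"
    and Z: "\<And>K. K > 0 \<Longrightarrow> integral {0..1} (\<lambda>x. h x * f1 x K * f2 x K) = 0"
  shows "\<exists>F. finite F \<and> (\<forall>x\<in>{0..1} - F. h x = 0)"
proof (rule ccontr)
  assume nz: "\<not> (\<exists>F. finite F \<and> (\<forall>x\<in>{0..1} - F. h x = 0))"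
  obtain S where S: "finite S" "\<And>x y. 0 \<le> x \<Longrightarrow> x \<le> y \<Longrightarrow> y \<le> 1 \<Longrightarrow> {x..y} \<inter> S = {} \<Longrightarrow> h x = h y"
    using pc_obtain[OF pch] by blast
  obtain S1 where S1: "finite S1" "\<And>x y. 0 \<le> x \<Longrightarrow> x \<le> y \<Longrightarrow> y \<le> 1 \<Longrightarrow> {x..y} \<inter> S1 = {} \<Longrightarrow> p1 x = p1 y"
    using pc_obtain[OF pc1] by blast
  obtain S2 where S2: "finite S2" "\<And>x y. 0 \<le> x \<Longrightarrow> x \<le> y \<Longrightarrow> y \<le> 1 \<Longrightarrow> {x..y} \<inter> S2 = {} \<Longrightarrow> p2 x = p2 y"
    using pc_obtain[OF pc2] by blast
  define T where "T = S \<union> S1 \<union> S2 \<union> {0,1}"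
  have fT: "finite T" "0 \<in> T" "1 \<in> T" "S \<subseteq> T" "S1 \<subseteq> T" "S2 \<subseteq> T" using S S1 S2 by (auto simp: T_def)
  define Zs where "Zs = {z\<in>{0..1} - T. h z \<noteq> 0}"
  have Zne: "Zs \<noteq> {}" using nz fT(1) unfolding Zs_def by blast
  define R where "R = (\<lambda>z. Min {t\<in>T. z < t})"
  have R: "R z \<in> T" "z < R z" "\<forall>t\<in>T. z < t \<longrightarrow> R z \<le> t" if "z \<in> Zs" for z
  proof -
    have ne: "{t\<in>T. z < t} \<noteq> {}" "finite {t\<in>T. z < t}" using that fT by (auto simp: Zs_def less_le)
    show "R z \<in> T" "z < R z" using Min_in[OF ne(2,1)] by (auto simp: R_def)
    show "\<forall>t\<in>T. z < t \<longrightarrow> R z \<le> t" using Min_le[OF ne(2)] by (auto simp: R_def)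
  qed
  have fRZ: "finite (R ` Zs)" "R ` Zs \<noteq> {}" using R fT(1) Zne by (auto intro: finite_subset[of _ T])
  define x0 where "x0 = Max (R ` Zs)"
  obtain z where z: "z \<in> Zs" "R z = x0" using Max_in[OF fRZ] unfolding x0_def by auto
  have zT: "z \<in> {0..1}" "z \<notin> T" "h z \<noteq> 0" using z by (auto simp: Zs_def)
  obtain x1 b where ab: "x1 \<in> T" "b \<in> T" "x1 < z" "z < b" "\<forall>t\<in>T. t \<le> x1 \<or> b \<le> t"
    using gap[OF fT(1-3) zT(1,2)] by blast
  have "R z \<le> b" using R(3)[OF z(1)] ab by auto
  moreover have "b \<le> R z" using R(1,2)[OF z(1)] ab(5) ab(3) by force
  ultimately have bx0: "b = x0" using z by simp
  have x10: "0 \<le> x1" using ab(3,4,5) fT(2) zT(1) by fastforce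
  have x01: "x0 \<le> 1" using ab(3,4,5) fT(3) zT(1) bx0 by fastforce
  have gapT: "\<forall>t\<in>T. t \<le> x1 \<or> x0 \<le> t" using ab bx0 by simp
  have x1z: "x1 < z" "z < x0" using ab bx0 by auto
  define c where "c = h z"
  have c0: "c \<noteq> 0" using zT by (simp add: c_def)
  have hc: "h x = c" if "x1 < x" "x < x0" for x unfolding c_def
    by (rule pc_const[where S=S and T=T, OF S(1) S(2) fT(4) gapT x10 x01]) (use that x1z in auto)
  have p1c: "p1 x = p1 z" if "x1 < x" "x < x0" for x
    by (rule pc_const[where S=S1 and T=T, OF S1(1) S1(2) fT(5) gapT x10 x01]) (use that x1z in auto)
  have p2c: "p2 x = p2 z" if "x1 < x" "x < x0" for x
    by (rule pc_const[where S=S2 and T=T, OF S2(1) S2(2) fT(6) gapT x10 x01]) (use that x1z in auto)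
  have hzero: "h x = 0" if "x \<in> {x0..1} - T" for x
  proof (rule ccontr)
    assume "h x \<noteq> 0"
    then have xZ: "x \<in> Zs" using that x10 x1z by (auto simp: Zs_def)
    then have "R x \<le> x0" unfolding x0_def using fRZ by (auto intro: Max_ge)
    moreover have "x0 \<noteq> x" using that ab bx0 by auto
    ultimately show False using R(2)[OF xZ] that by auto
  qed
  define m where "m = min (p1 z) (p2 z)"
  have m0: "m > 0" using pos1 pos2 zT by (auto simp: m_def)
  obtain B0 where B0: "\<forall>x\<in>{0..1}. \<bar>h x\<bar> \<le> B0" using pc_bounded[OF pch] by blast
  have B00: "0 \<le> B0" using B0 by force
  define A where "A = (2*x1 + x0)/3"
  define M where "M = (x1 + x0)/2"
  define Bp where "Bp = (x1 + 2*x0)/3"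
  define L where "L = (x0 - x1)/6"
  have L0: "L > 0" using x1z by (simp add: L_def)
  have pts: "x1 < A" "A < M" "M < Bp" "Bp < x0" "M - A = L" "Bp - M = L" "0 \<le> A" "Bp \<le> 1"
    using x1z x10 x01 by (auto simp: A_def M_def Bp_def L_def field_simps)
  define K where "K = 2 * B0 / (\<bar>c\<bar> * L * m * L^2) + 1"
  have "0 \<le> 2 * B0 / (\<bar>c\<bar> * L * m * L^2)" using B00 c0 L0 m0 by (intro divide_nonneg_pos) auto
  then have K0: "K > 0" by (simp add: K_def)
  define \<Phi> where "\<Phi> = (\<lambda>x. f1 x K * f2 x K)"
  have Phic: "continuous_on {0..1} \<Phi>" using Fc[OF K0] unfolding \<Phi>_def by (intro continuous_intros) auto
  have Phip: "\<Phi> x > 0" if "x \<in> {0..1}" for x using Fp[OF K0 that] by (simp add: \<Phi>_def)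
  have Phim: "\<Phi> x \<le> \<Phi> y" if "0 \<le> x" "x \<le> y" "y \<le> 1" for x y
  proof -
    have "f1 x K \<le> f1 y K" "f2 x K \<le> f2 y K" using Fm[OF K0 that] by auto
    moreover have "f1 x K > 0" "f2 x K > 0" using Fp[OF K0, of x] that by auto
    ultimately show ?thesis unfolding \<Phi>_def by (intro mult_mono) auto
  qed
  define g where "g = (\<lambda>x. h x * f1 x K * f2 x K)"
  have gP: "g x = h x * \<Phi> x" for x by (simp add: g_def \<Phi>_def)
  have Ig: "g integrable_on {u..v}" if "0 \<le> u" "v \<le> 1" for u v
    using pc_integrable[OF pch Phic that] by (simp add: gP[abs_def])
  have Icg: "(\<lambda>x. c * g x) integrable_on {u..v}" if "0 \<le> u" "v \<le> 1" for u v
    using Ig[OF that] by (rule integrable_on_mult_right)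
  have cint: "c * integral {u..v} g = integral {u..v} (\<lambda>x. c * g x)" if "0 \<le> u" "v \<le> 1" for u v
    using integral_mult[OF Ig[OF that]] by simp
  have tot: "integral {0..1} g = integral {0..A} g + integral {A..M} g + integral {M..Bp} g + integral {Bp..1} g"
  proof -
    have "integral {0..1} g = integral {0..A} g + integral {A..1} g"
      using Henstock_Kurzweil_Integration.integral_combine[of 0 A 1 g] Ig[of 0 1] pts by auto
    moreover have "integral {A..1} g = integral {A..M} g + integral {M..1} g"
      using Henstock_Kurzweil_Integration.integral_combine[of A M 1 g] Ig[of A 1] pts by auto
    moreover have "integral {M..1} g = integral {M..Bp} g + integral {Bp..1} g"
      using Henstock_Kurzweil_Integration.integral_combine[of M Bp 1 g] Ig[of M 1] pts by auto
    ultimately show ?thesis by simp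
  qed
  have z0: "integral {0..1} g = 0" using Z[OF K0] by (simp add: g_def)
  have P0: "c * integral {0..A} g \<ge> - (\<bar>c\<bar> * (B0 * \<Phi> A))"
  proof -
    have "norm (integral {0..A} g) \<le> integral {0..A} (\<lambda>x. B0 * \<Phi> A)"
    proof (rule integral_norm_bound_integral)
      show "g integrable_on {0..A}" using Ig pts by auto
      show "(\<lambda>x. B0 * \<Phi> A) integrable_on {0..A}" using has_integral_const_real by blast
      fix x assume x: "x \<in> {0..A}"
      have "\<bar>h x\<bar> \<le> B0" using B0 x pts by auto
      moreover have "0 < \<Phi> x" "\<Phi> x \<le> \<Phi> A" using Phip Phim x pts by auto
      ultimately have "\<bar>h x\<bar> * \<Phi> x \<le> B0 * \<Phi> A" by (intro mult_mono) auto
      then show "norm (g x) \<le> B0 * \<Phi> A" using \<open>0 < \<Phi> x\<close> by (simp add: gP abs_mult)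
    qed
    also have "\<dots> = A * (B0 * \<Phi> A)" using pts by simp
    also have "\<dots> \<le> B0 * \<Phi> A" using pts B00 Phip[of A] by (intro mult_left_le_one_le) auto
    finally have "\<bar>integral {0..A} g\<bar> \<le> B0 * \<Phi> A" by simp
    then have "\<bar>c * integral {0..A} g\<bar> \<le> \<bar>c\<bar> * (B0 * \<Phi> A)" by (simp add: abs_mult mult_left_mono)
    then show ?thesis by linarith
  qed
  have P1: "c * integral {A..M} g \<ge> 0"
  proof -
    have "0 \<le> integral {A..M} (\<lambda>x. c * g x)"
    proof (rule integral_nonneg)
      show "(\<lambda>x. c * g x) integrable_on {A..M}" using Icg pts by auto
      fix x assume x: "x \<in> {A..M}"
      then have "h x = c" using hc pts by auto
      moreover have "\<Phi> x > 0" using Phip x pts by auto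
      ultimately show "0 \<le> c * g x" by (simp add: gP) (metis mult.assoc mult_nonneg_nonneg zero_le_square less_imp_le)
    qed
    moreover have "c * integral {A..M} g = integral {A..M} (\<lambda>x. c * g x)" using pts by (intro cint) auto
    ultimately show ?thesis by linarith
  qed
  have P2: "c * integral {M..Bp} g \<ge> c * c * \<Phi> M * L"
  proof -
    have "integral {M..Bp} (\<lambda>x. c * c * \<Phi> M) \<le> integral {M..Bp} (\<lambda>x. c * g x)"
    proof (rule integral_le)
      show "(\<lambda>x. c * g x) integrable_on {M..Bp}" using Icg pts by auto
      show "(\<lambda>x. c * c * \<Phi> M) integrable_on {M..Bp}" using has_integral_const_real by blast
      fix x assume x: "x \<in> {M..Bp}"
      then have "h x = c" using hc pts by auto
      moreover have "\<Phi> M \<le> \<Phi> x" using Phim x pts by auto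
      ultimately show "c * c * \<Phi> M \<le> c * g x" by (simp add: gP) (metis mult.assoc mult_left_mono zero_le_square)
    qed
    moreover have "integral {M..Bp} (\<lambda>x. c * c * \<Phi> M) = c * c * \<Phi> M * L" using pts by simp
    moreover have "c * integral {M..Bp} g = integral {M..Bp} (\<lambda>x. c * g x)" using pts by (intro cint) auto
    ultimately show ?thesis by linarith
  qed
  have P3: "c * integral {Bp..1} g \<ge> 0"
  proof -
    have "0 \<le> integral {Bp..1} (\<lambda>x. c * g x)"
    proof (rule integral_nonneg_finite[of T])
      show "(\<lambda>x. c * g x) integrable_on {Bp..1}" using Icg pts by auto
      fix x assume x: "x \<in> {Bp..1} - T"
      show "0 \<le> c * g x"
      proof (cases "x < x0")
        case True
        then have "h x = c" using hc pts x by auto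
        moreover have "\<Phi> x > 0" using Phip x pts by auto
        ultimately show ?thesis by (simp add: gP) (metis mult.assoc mult_nonneg_nonneg zero_le_square less_imp_le)
      next
        case False
        then have "h x = 0" using hzero x by auto
        then show ?thesis by (simp add: gP)
      qed
    qed (use fT in auto)
    moreover have "c * integral {Bp..1} g = integral {Bp..1} (\<lambda>x. c * g x)" using pts by (intro cint) auto
    ultimately show ?thesis by linarith
  qed
  have grow: "\<Phi> A * (1 + K * m * L^2 / 2) \<le> \<Phi> M"
  proof -
    have mb: "\<forall>s\<in>{A..M}. m \<le> p1 s" "\<forall>s\<in>{A..M}. m \<le> p2 s"
      using p1c p2c pts by (auto simp: m_def)
    have G: "f1 A K * (1 + K * m * (M - A)^2 / 2) \<le> f1 M K" "f2 A K * (1 + K * m * (M - A)^2 / 2) \<le> f2 M K"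
      using Fg[OF K0 _ _ _ mb] m0 pts by auto
    have fA: "f1 A K > 0" "f2 A K > 0" using Fp[OF K0, of A] pts by auto
    have q: "1 \<le> 1 + K * m * L^2 / 2" using K0 m0 by simp
    have "\<Phi> A * (1 + K * m * L^2 / 2) = (f1 A K * (1 + K * m * L^2 / 2)) * f2 A K" by (simp add: \<Phi>_def)
    also have "\<dots> \<le> f1 M K * f2 M K"
    proof (rule mult_mono)
      show "f1 A K * (1 + K * m * L\<^sup>2 / 2) \<le> f1 M K" using G pts by simp
      have "f2 A K \<le> f2 A K * (1 + K * m * L^2 / 2)" using q fA by simp
      then show "f2 A K \<le> f2 M K" using G pts by simp
    qed (use fA Fp[OF K0, of M] pts in auto)
    finally show ?thesis by (simp add: \<Phi>_def)
  qed
  have "0 = c * integral {0..1} g" using z0 by simp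
  also have "\<dots> = c * integral {0..A} g + c * integral {A..M} g + c * integral {M..Bp} g + c * integral {Bp..1} g"
    using tot by (simp add: algebra_simps)
  finally have "0 \<ge> - (\<bar>c\<bar> * (B0 * \<Phi> A)) + c * c * \<Phi> M * L" using P0 P1 P2 P3 by linarith
  moreover have "c * c * \<Phi> M * L \<ge> c * c * (\<Phi> A * (1 + K * m * L^2 / 2)) * L"
    using grow L0 by (intro mult_right_mono mult_left_mono) auto
  moreover have "\<bar>c\<bar> * (\<bar>c\<bar> * L * (1 + K * m * L^2 / 2) * \<Phi> A) = c * c * (\<Phi> A * (1 + K * m * L^2 / 2)) * L"
  proof -
    define Y where "Y = 1 + K * m * L^2 / 2"
    have e1: "\<bar>c\<bar> * (\<bar>c\<bar> * L * Y * \<Phi> A) = (\<bar>c\<bar> * \<bar>c\<bar>) * (L * Y * \<Phi> A)" by (simp only: mult_ac)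
    have e2: "c * c * (\<Phi> A * Y) * L = (c * c) * (L * Y * \<Phi> A)" by (simp only: mult_ac)
    show ?thesis unfolding Y_def[symmetric] e1 e2 abs_mult_self_eq ..
  qed
  ultimately have "\<bar>c\<bar> * (B0 * \<Phi> A) \<ge> \<bar>c\<bar> * (\<bar>c\<bar> * L * (1 + K * m * L^2 / 2) * \<Phi> A)"
    by linarith
  then have "B0 * \<Phi> A \<ge> \<bar>c\<bar> * L * (1 + K * m * L^2 / 2) * \<Phi> A" using c0 by simp
  then have B1: "B0 \<ge> \<bar>c\<bar> * L * (1 + K * m * L^2 / 2)" using Phip[of A] pts by simp
  define D where "D = \<bar>c\<bar> * L * m * L^2"
  have D0: "D > 0" using c0 L0 m0 by (simp add: D_def)
  have "\<bar>c\<bar> * L * (1 + K * m * L^2 / 2) = \<bar>c\<bar> * L + K * D / 2" by (simp add: D_def algebra_simps)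
  also have "K * D / 2 = B0 + D / 2" using D0 c0 L0 m0 by (simp add: K_def D_def field_simps)
  finally have "B0 \<ge> \<bar>c\<bar> * L + B0 + D / 2" using B1 by simp
  moreover have "\<bar>c\<bar> * L > 0" using c0 L0 by simp
  ultimately show False using D0 by linarith
qed




lemma integral_cmul_real: "integral S (\<lambda>x. c * f x) = c * integral S (f :: 'a::euclidean_space \<Rightarrow> real)"
  using integral_cmul[where c=c and f=f and S=S] by simp

lemma sys_normalize:
  fixes q a v w :: "real \<Rightarrow> real" and l :: real
  assumes pc: "piecewise_const (\<lambda>x. (q x)^2)" and pos: "\<forall>x\<in>{0..1}. (q x)^2 > 0"
    and adef: "\<forall>x\<in>{0..1}. a x = 1 / (q x)^2" and l: "l > 0"
    and cv: "continuous_on {0..1} v" and cw: "continuous_on {0..1} w"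
    and nt: "\<exists>x\<in>{0..1}. v x \<noteq> 0"
    and eq: "\<forall>x\<in>{0..1}. v x = integral {0..x} (\<lambda>s. w s / a s) \<and> w x = w 0 + l * integral {0..x} v"
  shows "w 0 \<noteq> 0"
    and "\<forall>x\<in>{0..1}. w x / w 0 \<ge> 1"
    and "\<forall>x y. 0 \<le> x \<longrightarrow> x \<le> y \<longrightarrow> y \<le> 1 \<longrightarrow> w x / w 0 \<le> w y / w 0"
    and "\<forall>a b m. 0 \<le> a \<longrightarrow> a \<le> b \<longrightarrow> b \<le> 1 \<longrightarrow> (\<forall>s\<in>{a..b}. m \<le> (q s)^2) \<longrightarrow> 0 \<le> m \<longrightarrow>
            w a / w 0 * (1 + l * m * (b - a)^2 / 2) \<le> w b / w 0"
proof -
  have eqv: "v x = integral {0..x} (\<lambda>s. w s * (q s)^2)" if "x \<in> {0..1}" for x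
  proof -
    have "v x = integral {0..x} (\<lambda>s. w s / a s)" using eq that by blast
    also have "\<dots> = integral {0..x} (\<lambda>s. w s * (q s)^2)"
      by (rule integral_cong) (use adef that in auto)
    finally show ?thesis .
  qed
  have eqw: "w x = w 0 + l * integral {0..x} v" if "x \<in> {0..1}" for x using eq that by blast
  have Iwq: "(\<lambda>s. w s * (q s)^2) integrable_on {u..x}" if "0 \<le> u" "x \<le> 1" for u x
    using pc_integrable[OF pc cw that] by (simp add: ac_simps)
  show w0: "w 0 \<noteq> 0"
  proof
    assume w00: "w 0 = 0"
    obtain P where P: "\<forall>x\<in>{0..1}. \<bar>(q x)^2\<bar> \<le> P" using pc_bounded[OF pc] by blast
    have "\<bar>(q 0)^2\<bar> \<le> P" using P by simp
    then have P0: "P \<ge> 0" by (meson abs_ge_zero order_trans)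
    define u where "u = (\<lambda>x. \<bar>w x\<bar> + \<bar>v x\<bar>)"
    have cu: "continuous_on {0..1} u" unfolding u_def using cv cw by (intro continuous_intros)
    have Iu: "u integrable_on {0..x}" if "x \<in> {0..1}" for x
      by (rule integrable_continuous_real, rule continuous_on_subset[OF cu]) (use that in auto)
    have Iabs: "(\<lambda>s. \<bar>f s\<bar>) integrable_on {0..x}" if "x \<in> {0..1}" "continuous_on {0..1} f" for x and f :: "real \<Rightarrow> real"
      by (rule integrable_continuous_real, rule continuous_on_subset[of "{0..1}"]) (use that in \<open>auto intro: continuous_intros\<close>)
    have intu: "0 \<le> integral {0..x} u" if "x \<in> {0..1}" for x
      by (rule integral_nonneg[OF Iu[OF that]]) (auto simp: u_def)
    have "u x \<le> (2 * (l + P)) * integral {0..x} u" if x: "x \<in> {0..1}" for x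
    proof -
      have "\<bar>integral {0..x} v\<bar> \<le> integral {0..x} (\<lambda>s. \<bar>v s\<bar>)"
        using integral_norm_bound_integral[of v "{0..x}" "\<lambda>s. \<bar>v s\<bar>"]
          integrable_continuous_real[OF continuous_on_subset[OF cv]] Iabs[OF x cv] x by auto
      also have "\<dots> \<le> integral {0..x} u"
        by (rule integral_le[OF Iabs[OF x cv] Iu[OF x]]) (auto simp: u_def)
      finally have a1: "\<bar>w x\<bar> \<le> l * integral {0..x} u"
        using eqw[OF x] w00 l by (simp add: abs_mult)
      have "norm (integral {0..x} (\<lambda>s. w s * (q s)^2)) \<le> integral {0..x} (\<lambda>s. P * \<bar>w s\<bar>)"
      proof (rule integral_norm_bound_integral)
        show "(\<lambda>s. w s * (q s)^2) integrable_on {0..x}" using Iwq x by auto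
        show "(\<lambda>s. P * \<bar>w s\<bar>) integrable_on {0..x}" using Iabs[OF x cw] by (rule integrable_on_mult_right)
        fix s assume s: "s \<in> {0..x}"
        have "\<bar>(q s)^2\<bar> \<le> P" using P s x by auto
        then have "\<bar>w s\<bar> * \<bar>(q s)^2\<bar> \<le> \<bar>w s\<bar> * P" by (rule mult_left_mono) simp
        then show "norm (w s * (q s)^2) \<le> P * \<bar>w s\<bar>" by (simp add: abs_mult mult.commute)
      qed
      also have "\<dots> = P * integral {0..x} (\<lambda>s. \<bar>w s\<bar>)" by (rule integral_cmul_real)
      also have "\<dots> \<le> P * integral {0..x} u"
        by (rule mult_left_mono[OF integral_le[OF Iabs[OF x cw] Iu[OF x]] P0]) (auto simp: u_def)
      finally have a2: "\<bar>v x\<bar> \<le> P * integral {0..x} u" using eqv[OF x] by simp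
      have "u x \<le> (l + P) * integral {0..x} u" using a1 a2 by (simp add: u_def algebra_simps)
      also have "\<dots> \<le> (2 * (l + P)) * integral {0..x} u"
        using intu[OF x] l P0 by (intro mult_right_mono) auto
      finally show ?thesis .
    qed
    then have "\<forall>x\<in>{0..1}. u x = 0"
      using gronwall0[OF cu, of "2 * (l + P)"] l P0 by (auto simp: u_def)
    then show False using nt by (auto simp: u_def)
  qed
  define W where "W = (\<lambda>x. w x / w 0)"
  define V where "V = (\<lambda>x. v x / w 0)"
  have cW: "continuous_on {0..1} W" unfolding W_def using cw w0 by (intro continuous_intros) auto
  have cV: "continuous_on {0..1} V" unfolding V_def using cv w0 by (intro continuous_intros) auto
  have eV: "\<forall>x\<in>{0..1}. V x = integral {0..x} (\<lambda>s. W s * (q s)^2)"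
  proof
    fix x :: real assume x: "x \<in> {0..1}"
    have "integral {0..x} (\<lambda>s. W s * (q s)^2) = integral {0..x} (\<lambda>s. (1 / w 0) * (w s * (q s)^2))"
      by (simp add: W_def)
    also have "\<dots> = (1 / w 0) * integral {0..x} (\<lambda>s. w s * (q s)^2)" by (rule integral_cmul_real)
    finally show "V x = integral {0..x} (\<lambda>s. W s * (q s)^2)" using eqv[OF x] by (simp add: V_def)
  qed
  have eW: "\<forall>x\<in>{0..1}. W x = 1 + l * integral {0..x} V"
  proof
    fix x :: real assume x: "x \<in> {0..1}"
    have "integral {0..x} V = integral {0..x} (\<lambda>s. (1 / w 0) * v s)" by (simp add: V_def)
    also have "\<dots> = (1 / w 0) * integral {0..x} v" by (rule integral_cmul_real)
    finally show "W x = 1 + l * integral {0..x} V" using eqw[OF x] w0 by (simp add: W_def field_simps)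
  qed
  have pnn: "\<forall>x\<in>{0..1}. (q x)^2 \<ge> 0" by simp
  note VS = volterra_sys[OF pc pnn cW cV _ eV eW, simplified W_def]
  show "\<forall>x\<in>{0..1}. w x / w 0 \<ge> 1" using VS(1) l by simp
  show "\<forall>x y. 0 \<le> x \<longrightarrow> x \<le> y \<longrightarrow> y \<le> 1 \<longrightarrow> w x / w 0 \<le> w y / w 0" using VS(2) l by simp
  show "\<forall>a b m. 0 \<le> a \<longrightarrow> a \<le> b \<longrightarrow> b \<le> 1 \<longrightarrow> (\<forall>s\<in>{a..b}. m \<le> (q s)^2) \<longrightarrow> 0 \<le> m \<longrightarrow>
            w a / w 0 * (1 + l * m * (b - a)^2 / 2) \<le> w b / w 0" using VS(3) l by simp
qed




lemma psi_props:
  fixes q :: "real \<Rightarrow> real" and \<psi> :: "real \<Rightarrow> real \<Rightarrow> real"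
  assumes pc: "piecewise_const (\<lambda>x. (q x)^2)"
    and psi: "\<forall>k\<ge>0. continuous_on {0..1} (\<lambda>x. \<psi> x k) \<and>
       (\<forall>x\<in>{0..1}. \<psi> x k = 1 + k^2 * integral {0..x} (\<lambda>s. (x - s) * (q s)^2 * \<psi> s k))"
    and K: "K > 0"
  shows "continuous_on {0..1} (\<lambda>x. \<psi> x (sqrt K))"
    and "\<forall>x\<in>{0..1}. \<psi> x (sqrt K) > 0"
    and "\<forall>x y. 0 \<le> x \<longrightarrow> x \<le> y \<longrightarrow> y \<le> 1 \<longrightarrow> \<psi> x (sqrt K) \<le> \<psi> y (sqrt K)"
    and "\<forall>a b m. 0 \<le> a \<longrightarrow> a \<le> b \<longrightarrow> b \<le> 1 \<longrightarrow> (\<forall>s\<in>{a..b}. m \<le> (q s)^2) \<longrightarrow> 0 \<le> m \<longrightarrow>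
            \<psi> a (sqrt K) * (1 + K * m * (b - a)^2 / 2) \<le> \<psi> b (sqrt K)"
proof -
  define k where "k = sqrt K"
  have k0: "k \<ge> 0" using K by (simp add: k_def)
  have kK: "k^2 = K" using K by (simp add: k_def)
  have c: "continuous_on {0..1} (\<lambda>x. \<psi> x k)" and e: "\<forall>x\<in>{0..1}. \<psi> x k = 1 + k^2 * integral {0..x} (\<lambda>s. (x - s) * (q s)^2 * \<psi> s k)"
    using psi k0 by auto
  have pnn: "\<forall>x\<in>{0..1}. (q x)^2 \<ge> 0" by simp
  have k2: "k^2 \<ge> 0" by simp
  note V = volterra2[where p="\<lambda>s. (q s)^2" and \<phi>="\<lambda>x. \<psi> x k" and K="k^2", OF pc pnn c k2 e]
  show "continuous_on {0..1} (\<lambda>x. \<psi> x (sqrt K))" using c by (simp add: k_def)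
  show "\<forall>x\<in>{0..1}. \<psi> x (sqrt K) > 0" using V(1) unfolding k_def by force
  show "\<forall>x y. 0 \<le> x \<longrightarrow> x \<le> y \<longrightarrow> y \<le> 1 \<longrightarrow> \<psi> x (sqrt K) \<le> \<psi> y (sqrt K)" using V(2) by (simp add: k_def)
  show "\<forall>a b m. 0 \<le> a \<longrightarrow> a \<le> b \<longrightarrow> b \<le> 1 \<longrightarrow> (\<forall>s\<in>{a..b}. m \<le> (q s)^2) \<longrightarrow> 0 \<le> m \<longrightarrow>
            \<psi> a (sqrt K) * (1 + K * m * (b - a)^2 / 2) \<le> \<psi> b (sqrt K)" using V(3) kK by (simp add: k_def)
qed

theorem theorem2:
  fixes q1 q2 a1 a2 :: "real \<Rightarrow> real"
    and \<psi>1 \<psi>2 :: "real \<Rightarrow> real \<Rightarrow> real"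
    and v1 v2 w1 w2 :: "real \<Rightarrow> real \<Rightarrow> real"
  assumes pc1: "piecewise_const (\<lambda>x. (q1 x)^2)"
    and pc2: "piecewise_const (\<lambda>x. (q2 x)^2)"
    and pos1: "\<forall>x\<in>{0..1}. (q1 x)^2 > 0"
    and pos2: "\<forall>x\<in>{0..1}. (q2 x)^2 > 0"
    and a1_def: "\<forall>x\<in>{0..1}. a1 x = 1 / (q1 x)^2"
    and a2_def: "\<forall>x\<in>{0..1}. a2 x = 1 / (q2 x)^2"
    \<comment> \<open>psi_j(.,k): the continuous solution of the Volterra integral equation\<close>
    and psi1: "\<forall>k\<ge>0. continuous_on {0..1} (\<lambda>x. \<psi>1 x k) \<and>
       (\<forall>x\<in>{0..1}. \<psi>1 x k = 1 + k^2 * integral {0..x} (\<lambda>s. (x - s) * (q1 s)^2 * \<psi>1 s k))"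
    and psi2: "\<forall>k\<ge>0. continuous_on {0..1} (\<lambda>x. \<psi>2 x k) \<and>
       (\<forall>x\<in>{0..1}. \<psi>2 x k = 1 + k^2 * integral {0..x} (\<lambda>s. (x - s) * (q2 s)^2 * \<psi>2 s k))"
    \<comment> \<open>v_j(.,l): nontrivial solution with v_j(0)=0; w_j = a_j v_j' is its continuous quasi-derivative\<close>
    and v1: "\<forall>l\<ge>0. continuous_on {0..1} (\<lambda>x. v1 x l) \<and> continuous_on {0..1} (\<lambda>x. w1 x l) \<and>
       v1 0 l = 0 \<and> (\<exists>x\<in>{0..1}. v1 x l \<noteq> 0) \<and>
       (\<forall>x\<in>{0..1}. v1 x l = integral {0..x} (\<lambda>s. w1 s l / a1 s) \<and>
                     w1 x l = w1 0 l + l * integral {0..x} (\<lambda>s. v1 s l))"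
    and v2: "\<forall>l\<ge>0. continuous_on {0..1} (\<lambda>x. v2 x l) \<and> continuous_on {0..1} (\<lambda>x. w2 x l) \<and>
       v2 0 l = 0 \<and> (\<exists>x\<in>{0..1}. v2 x l \<noteq> 0) \<and>
       (\<forall>x\<in>{0..1}. v2 x l = integral {0..x} (\<lambda>s. w2 s l / a2 s) \<and>
                     w2 x l = w2 0 l + l * integral {0..x} (\<lambda>s. v2 s l))"
  shows "(\<forall>h. piecewise_const h \<and>
            (\<forall>k>0. integral {0..1} (\<lambda>x. h x * \<psi>1 x k * \<psi>2 x k) = 0)
          \<longrightarrow> (\<exists>F. finite F \<and> (\<forall>x\<in>{0..1} - F. h x = 0)))
       \<and> (\<forall>h. piecewise_const h \<and>
            (\<forall>l>0. integral {0..1} (\<lambda>x. h x * (w1 x l / a1 x) * (w2 x l / a2 x)) = 0)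
          \<longrightarrow> (\<exists>F. finite F \<and> (\<forall>x\<in>{0..1} - F. h x = 0)))"
proof (intro conjI allI impI)
  fix h :: "real \<Rightarrow> real"
  assume H: "piecewise_const h \<and> (\<forall>k>0. integral {0..1} (\<lambda>x. h x * \<psi>1 x k * \<psi>2 x k) = 0)"
  note P1 = psi_props[OF pc1 psi1] and P2 = psi_props[OF pc2 psi2]
  show "\<exists>F. finite F \<and> (\<forall>x\<in>{0..1} - F. h x = 0)"
  proof (rule density[where ?p1.0="\<lambda>x. (q1 x)^2" and ?p2.0="\<lambda>x. (q2 x)^2" and h=h
        and ?f1.0="\<lambda>x K. \<psi>1 x (sqrt K)" and ?f2.0="\<lambda>x K. \<psi>2 x (sqrt K)", OF pc1 pc2 pos1 pos2])
    show "piecewise_const h" using H by simp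
    fix K :: real assume K: "K > 0"
    show "continuous_on {0..1} (\<lambda>x. \<psi>1 x (sqrt K)) \<and> continuous_on {0..1} (\<lambda>x. \<psi>2 x (sqrt K))"
      using P1(1)[OF K] P2(1)[OF K] by simp
    show "integral {0..1} (\<lambda>x. h x * \<psi>1 x (sqrt K) * \<psi>2 x (sqrt K)) = 0"
      using H K by simp
    {
      fix x :: real assume "x \<in> {0..1}"
      then show "\<psi>1 x (sqrt K) > 0 \<and> \<psi>2 x (sqrt K) > 0" using P1(2)[OF K] P2(2)[OF K] by simp
    }
    {
      fix x y :: real assume "0 \<le> x" "x \<le> y" "y \<le> 1"
      then show "\<psi>1 x (sqrt K) \<le> \<psi>1 y (sqrt K) \<and> \<psi>2 x (sqrt K) \<le> \<psi>2 y (sqrt K)"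
        using P1(3)[OF K] P2(3)[OF K] by simp
    }
    {
      fix a b m :: real assume "0 \<le> a" "a \<le> b" "b \<le> 1" "\<forall>s\<in>{a..b}. m \<le> (q1 s)^2" "\<forall>s\<in>{a..b}. m \<le> (q2 s)^2" "0 \<le> m"
      then show "\<psi>1 a (sqrt K) * (1 + K * m * (b - a)^2 / 2) \<le> \<psi>1 b (sqrt K) \<and>
                 \<psi>2 a (sqrt K) * (1 + K * m * (b - a)^2 / 2) \<le> \<psi>2 b (sqrt K)"
        using P1(4)[OF K] P2(4)[OF K] by simp
    }
  qed
next
  fix h :: "real \<Rightarrow> real"
  assume H: "piecewise_const h \<and> (\<forall>l>0. integral {0..1} (\<lambda>x. h x * (w1 x l / a1 x) * (w2 x l / a2 x)) = 0)"
  have S1: "w1 0 l \<noteq> 0 \<and> (\<forall>x\<in>{0..1}. w1 x l / w1 0 l \<ge> 1) \<and>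
      (\<forall>x y. 0 \<le> x \<longrightarrow> x \<le> y \<longrightarrow> y \<le> 1 \<longrightarrow> w1 x l / w1 0 l \<le> w1 y l / w1 0 l) \<and>
      (\<forall>a b m. 0 \<le> a \<longrightarrow> a \<le> b \<longrightarrow> b \<le> 1 \<longrightarrow> (\<forall>s\<in>{a..b}. m \<le> (q1 s)^2) \<longrightarrow> 0 \<le> m \<longrightarrow>
            w1 a l / w1 0 l * (1 + l * m * (b - a)^2 / 2) \<le> w1 b l / w1 0 l)" if l: "l > 0" for l
  proof -
    have "continuous_on {0..1} (\<lambda>x. v1 x l)" "continuous_on {0..1} (\<lambda>x. w1 x l)" "\<exists>x\<in>{0..1}. v1 x l \<noteq> 0"
      "\<forall>x\<in>{0..1}. v1 x l = integral {0..x} (\<lambda>s. w1 s l / a1 s) \<and> w1 x l = w1 0 l + l * integral {0..x} (\<lambda>s. v1 s l)"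
      using v1[rule_format, OF less_imp_le[OF l]] by blast+
    note N = sys_normalize[OF pc1 pos1 a1_def l this]
    then show ?thesis by blast
  qed
  have S2: "w2 0 l \<noteq> 0 \<and> (\<forall>x\<in>{0..1}. w2 x l / w2 0 l \<ge> 1) \<and>
      (\<forall>x y. 0 \<le> x \<longrightarrow> x \<le> y \<longrightarrow> y \<le> 1 \<longrightarrow> w2 x l / w2 0 l \<le> w2 y l / w2 0 l) \<and>
      (\<forall>a b m. 0 \<le> a \<longrightarrow> a \<le> b \<longrightarrow> b \<le> 1 \<longrightarrow> (\<forall>s\<in>{a..b}. m \<le> (q2 s)^2) \<longrightarrow> 0 \<le> m \<longrightarrow>
            w2 a l / w2 0 l * (1 + l * m * (b - a)^2 / 2) \<le> w2 b l / w2 0 l)" if l: "l > 0" for l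
  proof -
    have "continuous_on {0..1} (\<lambda>x. v2 x l)" "continuous_on {0..1} (\<lambda>x. w2 x l)" "\<exists>x\<in>{0..1}. v2 x l \<noteq> 0"
      "\<forall>x\<in>{0..1}. v2 x l = integral {0..x} (\<lambda>s. w2 s l / a2 s) \<and> w2 x l = w2 0 l + l * integral {0..x} (\<lambda>s. v2 s l)"
      using v2[rule_format, OF less_imp_le[OF l]] by blast+
    note N = sys_normalize[OF pc2 pos2 a2_def l this]
    then show ?thesis by blast
  qed
  define h' where "h' = (\<lambda>x. h x * (q1 x)^2 * (q2 x)^2)"
  have pch': "piecewise_const h'" unfolding h'_def using H pc1 pc2 by (intro pc_mult) auto
  have "\<exists>F. finite F \<and> (\<forall>x\<in>{0..1} - F. h' x = 0)"
  proof (rule density[where ?p1.0="\<lambda>x. (q1 x)^2" and ?p2.0="\<lambda>x. (q2 x)^2" and h=h'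
        and ?f1.0="\<lambda>x K. w1 x K / w1 0 K" and ?f2.0="\<lambda>x K. w2 x K / w2 0 K", OF pc1 pc2 pos1 pos2 pch'])
    fix K :: real assume K: "K > 0"
    have w10: "w1 0 K \<noteq> 0" and w20: "w2 0 K \<noteq> 0" using S1[OF K] S2[OF K] by auto
    have "continuous_on {0..1} (\<lambda>x. w1 x K)" "continuous_on {0..1} (\<lambda>x. w2 x K)"
      using v1[rule_format, OF less_imp_le[OF K]] v2[rule_format, OF less_imp_le[OF K]] by blast+
    then show "continuous_on {0..1} (\<lambda>x. w1 x K / w1 0 K) \<and> continuous_on {0..1} (\<lambda>x. w2 x K / w2 0 K)"
      using w10 w20 by (auto intro!: continuous_intros)
    have "integral {0..1} (\<lambda>x. h' x * (w1 x K / w1 0 K) * (w2 x K / w2 0 K))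
        = integral {0..1} (\<lambda>x. (1 / (w1 0 K * w2 0 K)) * (h x * (w1 x K / a1 x) * (w2 x K / a2 x)))"
      by (rule integral_cong) (use a1_def a2_def in \<open>auto simp: h'_def\<close>)
    also have "\<dots> = (1 / (w1 0 K * w2 0 K)) * integral {0..1} (\<lambda>x. h x * (w1 x K / a1 x) * (w2 x K / a2 x))"
      by (rule integral_cmul_real)
    also have "\<dots> = 0" using H K by simp
    finally show "integral {0..1} (\<lambda>x. h' x * (w1 x K / w1 0 K) * (w2 x K / w2 0 K)) = 0" .
    {
      fix x :: real assume "x \<in> {0..1}"
      then show "w1 x K / w1 0 K > 0 \<and> w2 x K / w2 0 K > 0" using S1[OF K] S2[OF K]
        by (meson less_le_trans zero_less_one)
    }
    {
      fix x y :: real assume "0 \<le> x" "x \<le> y" "y \<le> 1"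
      then show "w1 x K / w1 0 K \<le> w1 y K / w1 0 K \<and> w2 x K / w2 0 K \<le> w2 y K / w2 0 K"
        using S1[OF K] S2[OF K] by blast
    }
    {
      fix a b m :: real assume "0 \<le> a" "a \<le> b" "b \<le> 1" "\<forall>s\<in>{a..b}. m \<le> (q1 s)^2" "\<forall>s\<in>{a..b}. m \<le> (q2 s)^2" "0 \<le> m"
      then show "w1 a K / w1 0 K * (1 + K * m * (b - a)^2 / 2) \<le> w1 b K / w1 0 K \<and>
                 w2 a K / w2 0 K * (1 + K * m * (b - a)^2 / 2) \<le> w2 b K / w2 0 K"
        using S1[OF K] S2[OF K] by blast
    }
  qed
  then obtain F where F: "finite F" "\<forall>x\<in>{0..1} - F. h' x = 0" by blast
  have "\<forall>x\<in>{0..1} - F. h x = 0"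
  proof
    fix x assume x: "x \<in> {0..1} - F"
    then have "(q1 x)^2 > 0" "(q2 x)^2 > 0" using pos1 pos2 by auto
    then show "h x = 0" using F(2) x by (auto simp: h'_def)
  qed
  then show "\<exists>F. finite F \<and> (\<forall>x\<in>{0..1} - F. h x = 0)" using F(1) by blast
qed


end
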